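(* For every positive integer $n$, \[\mathrm{Sort}_n(\mathrm{SC}_{1\underline{23}})=\mathrm{Av}_n(132,3214,4213),\] i.e. a permutation $\tau\in\mathfrak S_n$ satisfies $s(\mathrm{SC}_{1\underline{23}}(\tau))=12\cdots n$ if and only if $\tau$ avoids each of the classical patterns $132$, $3214$ and $4213$.
   Context: $\mathfrak S_n$ is the set of permutations of $\{1,\dots,n\}$ in one-line notation. A sequence of distinct numbers is order-isomorphic ($\simeq$) to a permutation $\sigma\in\mathfrak S_k$ if its entries have the same relative order as $\sigma$. A sequence $\tau$ contains a classical pattern $\sigma\in\mathfrak S_k$ if some subsequence $\tau_{i_1}\cdots\tau_{i_k}$ ($i_1<\dots<i_k$) is order-isomorphic to $\sigma$; for a vincular pattern, written with some entries underlined, the occurrence must additionally use consecutive positions for each block of adjacent underlined entries (e.g. an occurrence of $1\underline{23}$ is $\tau_i\tau_j\tau_{j+1}\simeq 123$ with $i<j$). Otherwise $\tau$ avoids $\sigma$. $\mathrm{Av}_n(\dots)$ is the set of permutations in $\mathfrak S_n$ avoiding all listed patterns. For a (possibly vincular) pattern $\sigma$, the $\sigma$-avoiding stack-sorting map $\mathrm{SC}_\sigma$ acts on an input permutation $\tau$ as follows: read the entries of $\tau$ from left to right; when the next entry $x$ is read, if pushing $x$ onto the stack yields a stack whose entries, read from top to bottom, avoid $\sigma$, push $x$; otherwise pop the top entry of the stack to the (right end of the) output and repeat this check. After all input entries are pushed, pop the remaining stack entries to the output. $\mathrm{SC}_\sigma(\tau)$ is the output. The map $s=\mathrm{SC}_{21}$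 is West's stack-sorting map. The sorting class is $\mathrm{Sort}_n(\mathrm{SC}_\sigma)=\{\tau\in\mathfrak S_n : s(\mathrm{SC}_\sigma(\tau))=12\cdots n\}$. *)

theory Defs
  imports Main
begin

definition perms :: "nat \<Rightarrow> nat list set" where
  "perms n = {xs. distinct xs \<and> set xs = {1..n}}"

definition order_iso :: "nat list \<Rightarrow> nat list \<Rightarrow> bool" where
  "order_iso xs ys \<longleftrightarrow> length xs = length ys \<and>
     (\<forall>i<length xs. \<forall>j<length xs. xs ! i < xs ! j \<longleftrightarrow> ys ! i < ys ! j)"

text \<open>A vincular pattern is a pair (sigma, A): sigma is the underlying permutation and
  A is the set of 0-based indices j such that the occurrence must use consecutive positions
  for the pattern entries j and j+1 (i.e. entries j and j+1 are in the same underlined block).\<close>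
type_synonym vpattern = "nat list \<times> nat set"

definition contains :: "nat list \<Rightarrow> vpattern \<Rightarrow> bool" where
  "contains tau p \<longleftrightarrow> (\<exists>idx :: nat list.
      length idx = length (fst p) \<and> sorted_wrt (<) idx \<and> (\<forall>i\<in>set idx. i < length tau) \<and>
      (\<forall>j\<in>snd p. Suc j < length idx \<longrightarrow> idx ! Suc j = Suc (idx ! j)) \<and>
      order_iso (map (\<lambda>i. tau ! i) idx) (fst p))"

definition avoids :: "nat list \<Rightarrow> vpattern \<Rightarrow> bool" where
  "avoids tau p \<longleftrightarrow> \<not> contains tau p"

definition classical :: "nat list \<Rightarrow> vpattern" where
  "classical sigma = (sigma, {})"

text \<open>The pattern 1\<underline>23: entries 2 and 3 (0-based indices 1, 2) adjacent.\<close>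
definition pat_1_23 :: vpattern where
  "pat_1_23 = ([1,2,3], {1})"

definition Av :: "nat \<Rightarrow> vpattern list \<Rightarrow> nat list set" where
  "Av n ps = {tau \<in> perms n. \<forall>p\<in>set ps. avoids tau p}"

text \<open>The stack is a list whose head is the top,
  so the stack read from top to bottom is the list itself.\<close>
fun sc_run :: "vpattern \<Rightarrow> nat list \<Rightarrow> nat list \<Rightarrow> nat list \<Rightarrow> nat list" where
  "sc_run p [] stk out = out @ stk"
| "sc_run p (x # xs) [] out = sc_run p xs [x] out"
| "sc_run p (x # xs) (y # ys) out =
     (if avoids (x # y # ys) p then sc_run p xs (x # y # ys) out
      else sc_run p (x # xs) ys (out @ [y]))"

definition SC :: "vpattern \<Rightarrow> nat list \<Rightarrow> nat list" where
  "SC p tau = sc_run p tau [] []"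

definition west_s :: "nat list \<Rightarrow> nat list" where
  "west_s tau = SC (classical [2,1]) tau"

definition Sort :: "nat \<Rightarrow> vpattern \<Rightarrow> nat list set" where
  "Sort n p = {tau \<in> perms n. west_s (SC p tau) = [1..<n+1]}"

end

theory Submission
  imports Defs "HOL-Library.Sublist" "HOL-Library.Multiset"
begin

fun st :: "vpattern \<Rightarrow> nat list \<Rightarrow> nat list \<Rightarrow> nat list \<Rightarrow> nat list \<times> nat list" where
  "st p [] stk out = (stk, out)"
| "st p (x # xs) [] out = st p xs [x] out"
| "st p (x # xs) (y # ys) out =
     (if avoids (x # y # ys) p then st p xs (x # y # ys) out
      else st p (x # xs) ys (out @ [y]))"

lemma sc_run_st: "sc_run p xs stk out = (case st p xs stk out of (s, ou) \<Rightarrow> ou @ s)"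
  by (induction p xs stk out rule: st.induct) auto

lemma st_prefix: "st p xs stk (a @ out) = (fst (st p xs stk out), a @ snd (st p xs stk out))"
  by (induction p xs stk out arbitrary: a rule: st.induct) (auto simp del: append_assoc simp: append_assoc[symmetric])

lemma st_out: "st p xs stk out = (fst (st p xs stk []), out @ snd (st p xs stk []))"
  using st_prefix[of p xs stk out "[]"] by simp

lemma st_append: "st p (xs @ ys) stk out = st p ys (fst (st p xs stk out)) (snd (st p xs stk out))"
  by (induction p xs stk out rule: st.induct) auto

lemma st_mset: "mset (snd (st p xs stk out)) + mset (fst (st p xs stk out)) = mset out + mset stk + mset xs"
proof (induction p xs stk out rule: st.induct)
  case (3 p x xs y ys out)
  then show ?case by (cases "avoids (x # y # ys) p") auto
qed auto

lemma c123: "contains s pat_1_23 \<longleftrightarrow> (\<exists>i j. i < j \<and> Suc j < length s \<and> s!i < s!j \<and> s!j < s!Suc j)"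
proof
  assume "contains s pat_1_23"
  then obtain idx where l: "length idx = 3" and so: "sorted_wrt (<) idx" and b: "\<forall>i\<in>set idx. i < length s"
    and a: "\<forall>j\<in>{1}. Suc j < length idx \<longrightarrow> idx ! Suc j = Suc (idx ! j)"
    and o: "order_iso (map (\<lambda>i. s ! i) idx) [1,2,3]"
    unfolding contains_def pat_1_23_def by (auto simp: numeral_3_eq_3)
  from l obtain i j k where idx: "idx = [i,j,k]" by (auto simp: numeral_3_eq_3 length_Suc_conv)
  from o have o': "\<forall>a<3. \<forall>b<3. [s!i, s!j, s!k] ! a < [s!i,s!j,s!k] ! b \<longleftrightarrow> [1::nat,2,3] ! a < [1,2,3] ! b" 
    unfolding order_iso_def idx by simp
  from o'[rule_format, of 0 1] o'[rule_format, of 1 2] have "s!i < s!j" "s!j < s!k" by (simp_all add: numeral_2_eq_2)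
  with so a b idx show "\<exists>i j. i < j \<and> Suc j < length s \<and> s!i < s!j \<and> s!j < s!Suc j" by auto
next
  assume "\<exists>i j. i < j \<and> Suc j < length s \<and> s!i < s!j \<and> s!j < s!Suc j"
  then obtain i j where h: "i < j" "Suc j < length s" "s!i < s!j" "s!j < s!Suc j" by auto
  show "contains s pat_1_23" unfolding contains_def pat_1_23_def
    apply (rule exI[of _ "[i,j,Suc j]"])
    using h by (auto simp: order_iso_def less_Suc_eq numeral_3_eq_3)
qed

lemma c21: "contains s (classical [2,1]) \<longleftrightarrow> (\<exists>i j. i < j \<and> j < length s \<and> s!j < s!i)"
proof
  assume "contains s (classical [2,1])"
  then obtain idx where l: "length idx = 2" and so: "sorted_wrt (<) idx" and b: "\<forall>i\<in>set idx. i < length s"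
    and o: "order_iso (map (\<lambda>i. s ! i) idx) [2,1]"
    unfolding contains_def classical_def by (auto simp: numeral_2_eq_2)
  from l obtain i j where idx: "idx = [i,j]" by (auto simp: numeral_2_eq_2 length_Suc_conv)
  from o have "\<forall>a<2. \<forall>b<2. [s!i, s!j] ! a < [s!i,s!j] ! b \<longleftrightarrow> [2::nat,1] ! a < [2,1] ! b" 
    unfolding order_iso_def idx by simp
  from this[rule_format, of 1 0] have "s!j < s!i" by simp
  with so b idx show "\<exists>i j. i < j \<and> j < length s \<and> s!j < s!i" by auto
next
  assume "\<exists>i j. i < j \<and> j < length s \<and> s!j < s!i"
  then obtain i j where h: "i < j" "j < length s" "s!j < s!i" by auto
  show "contains s (classical [2,1])" unfolding contains_def classical_def
    apply (rule exI[of _ "[i,j]"])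
    using h by (auto simp: order_iso_def less_Suc_eq numeral_2_eq_2)
qed

lemma c123_base:
  assumes "\<forall>y\<in>set S. m < y" "\<forall>y\<in>set D. m < y" "sorted_wrt (>) D"
  shows "contains (S @ m # D) pat_1_23 \<longleftrightarrow> contains S pat_1_23"
proof
  assume "contains (S @ m # D) pat_1_23"
  then obtain i j where h: "i < j" "Suc j < length (S @ m # D)" "(S @ m # D)!i < (S @ m # D)!j"
    "(S @ m # D)!j < (S @ m # D)!Suc j" by (auto simp: c123)
  have "Suc j < length S"
  proof (rule ccontr)
    assume "\<not> Suc j < length S"
    then consider "Suc j = length S" | "j = length S" | "j > length S" by linarith
    then show False
    proof cases
      case 1
      then have "(S @ m # D)!Suc j = m" "(S @ m # D)!j = S!j" by (auto simp: nth_append)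
      moreover have "S!j \<in> set S" using 1 by simp
      ultimately show False using h assms(1) by fastforce
    next
      case 2
      then have "(S @ m # D)!j = m" "(S @ m # D)!i = S!i" using h by (auto simp: nth_append)
      moreover have "S!i \<in> set S" using 2 h by simp
      ultimately show False using h assms(1) by fastforce
    next
      case 3
      then obtain k where k: "j = length S + Suc k" by (metis add_Suc_right less_imp_Suc_add)
      then have "(S @ m # D)!j = D!k" "(S @ m # D)!Suc j = D!Suc k" by (auto simp: nth_append)
      moreover have "Suc k < length D" using h k by simp
      moreover have "D!k > D!Suc k" using sorted_wrt_nth_less[OF assms(3), of k "Suc k"] \<open>Suc k < length D\<close> by simp
      ultimately show False using h by simp
    qed
  qed
  then show "contains S pat_1_23" unfolding c123
    apply - apply (rule exI[of _ i], rule exI[of _ j]) using h by (auto simp: nth_append)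
next
  assume "contains S pat_1_23"
  then obtain i j where h: "i < j" "Suc j < length S" "S!i < S!j" "S!j < S!Suc j" by (auto simp: c123)
  show "contains (S @ m # D) pat_1_23" unfolding c123
    apply (rule exI[of _ i], rule exI[of _ j]) using h by (auto simp: nth_append)
qed

lemma avoids_dec: "sorted_wrt (>) D \<Longrightarrow> avoids (z # D) pat_1_23"
  unfolding avoids_def c123
proof clarify
  fix i j assume h: "sorted_wrt (>) D" "i < j" "Suc j < length (z # D)" "(z # D) ! i < (z # D) ! j" "(z # D) ! j < (z # D) ! Suc j"
  then obtain k where "j = Suc k" by (cases j) auto
  with h show False by (auto dest: sorted_wrt_nth_less[of _ D k "Suc k"])
qed

lemma st_base:
  assumes "p = pat_1_23" "\<forall>y\<in>set xs. m < y" "\<forall>y\<in>set stk. m < y" "\<forall>y\<in>set D. m < y" "sorted_wrt (>) D"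
  shows "st p xs (stk @ m # D) out = (fst (st p xs stk out) @ m # D, snd (st p xs stk out))"
  using assms
proof (induction p xs stk out rule: st.induct)
  case (1 p stk out)
  then show ?case by simp
next
  case (2 p x xs out)
  have "avoids (x # m # D) p" using 2 c123_base[of "[x]" m D] by (simp add: avoids_def c123)
  then show ?case using 2 by simp
next
  case (3 p x xs y ys out)
  have "avoids ((x # y # ys) @ m # D) p \<longleftrightarrow> avoids (x # y # ys) p"
    using 3(3-7) c123_base[of "x # y # ys" m D] by (simp add: avoids_def)
  then show ?case using 3 by auto
qed

definition dsplit :: "nat list \<Rightarrow> nat list \<Rightarrow> nat list \<Rightarrow> bool" where
  "dsplit S P D \<longleftrightarrow> S = P @ D \<and> sorted_wrt (>) D \<and> (P \<noteq> [] \<longrightarrow> D \<noteq> [] \<and> last P < hd D)"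

lemma st_flush:
  assumes "p = pat_1_23" "\<forall>y\<in>set S. m < y" "dsplit S P D"
  shows "st p (m # xs) S out = st p xs (m # D) (out @ P)"
  using assms
proof (induction P arbitrary: S out)
  case Nil
  then have S: "S = D" "sorted_wrt (>) D" by (auto simp: dsplit_def)
  show ?case
  proof (cases D)
    case (Cons y ys)
    have "avoids (m # y # ys) p" using avoids_dec[of D m] S Cons Nil by simp
    then show ?thesis using S Cons by simp
  qed (use S in simp)
next
  case (Cons y P')
  have S: "S = y # (P' @ D)" and D: "D \<noteq> []" "last (y # P') < hd D" "sorted_wrt (>) D"
    using Cons.prems by (auto simp: dsplit_def)
  have ml: "m < last (y # P')" using Cons.prems(2) S by (metis Un_iff last_in_set list.distinct(1) set_append set_simps(2) insert_iff)
  have "contains (m # y # P' @ D) pat_1_23"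
    unfolding c123
  proof (intro exI conjI)
    let ?s = "m # y # P' @ D"
    have e1: "?s ! Suc (length P') = last (y # P')" by (simp add: nth_append last_conv_nth)
    have e2: "?s ! Suc (Suc (length P')) = hd D" using D by (simp add: nth_append hd_conv_nth)
    show "0 < Suc (length P')" by simp
    show "Suc (Suc (length P')) < length ?s" using D by simp
    show "?s ! 0 < ?s ! Suc (length P')" using e1 ml by simp
    show "?s ! Suc (length P') < ?s ! Suc (Suc (length P'))" using e1 e2 D by simp
  qed
  then have "st p (m # xs) S out = st p (m # xs) (P' @ D) (out @ [y])"
    using Cons.prems(1) S by (simp add: avoids_def)
  also have "\<dots> = st p xs (m # D) ((out @ [y]) @ P')"
  proof -
    have "\<forall>y\<in>set (P' @ D). m < y" using Cons.prems(2) S by auto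
    moreover have "dsplit (P' @ D) P' D" using D by (auto simp: dsplit_def)
    ultimately show ?thesis using Cons.IH[of "P' @ D" "out @ [y]"] Cons.prems(1) by blast
  qed
  finally show ?case by simp
qed

lemma st_nonempty: "xs \<noteq> [] \<or> stk \<noteq> [] \<Longrightarrow> fst (st p xs stk out) \<noteq> []"
  by (induction p xs stk out rule: st.induct) auto

lemma dsplit_exists: "distinct S \<Longrightarrow> \<exists>P D. dsplit S P D"
proof (induction S)
  case Nil
  then show ?case by (auto simp: dsplit_def)
next
  case (Cons y S)
  then obtain P D where d: "dsplit S P D" by auto
  show ?case
  proof (cases "P = []")
    case True
    then have SD: "S = D" "sorted_wrt (>) D" using d by (auto simp: dsplit_def)
    show ?thesis
    proof (cases "D = [] \<or> y > hd D")
      case True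
      have "\<forall>z\<in>set D. z < y"
      proof (cases D)
        case (Cons a list)
        then have "a < y" using True by simp
        moreover have "\<forall>z\<in>set list. z < a" using SD Cons by simp
        ultimately show ?thesis using Cons by auto
      qed simp
      then have "sorted_wrt (>) (y # D)" using SD by simp
      then show ?thesis using SD apply - apply (rule exI[of _ "[]"], rule exI[of _ "y # D"]) by (auto simp: dsplit_def)
    next
      case False
      then have "y < hd D" using Cons.prems SD by (cases D) auto
      then show ?thesis using SD False apply - apply (rule exI[of _ "[y]"], rule exI[of _ D]) by (auto simp: dsplit_def)
    qed
  next
    case False
    then show ?thesis using d apply - apply (rule exI[of _ "y # P"], rule exI[of _ D]) by (auto simp: dsplit_def)
  qed
qed

lemma dsplit_unique: assumes "dsplit S P1 D1" "dsplit S P2 D2" shows "P1 = P2 \<and> D1 = D2"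
proof -
  have *: False if t1: "dsplit S Q1 E1" and t2: "dsplit S Q2 E2" and t3: "length E1 < length E2" for Q1 E1 Q2 E2
  proof -
    from t1 t2 have eq: "Q1 @ E1 = Q2 @ E2" by (auto simp: dsplit_def)
    then obtain us where "Q1 = Q2 @ us \<and> us @ E1 = E2 \<or> Q1 @ us = Q2 \<and> E1 = us @ E2"
      by (auto simp: append_eq_append_conv2)
    then have u: "Q1 = Q2 @ us" "E2 = us @ E1" using t3 by auto
    then have "us \<noteq> []" using t3 by auto
    then have "Q1 \<noteq> []" using u by auto
    then have "E1 \<noteq> []" "last Q1 < hd E1" using t1 by (auto simp: dsplit_def)
    moreover have "last Q1 = last us" using u \<open>us \<noteq> []\<close> by simp
    moreover have "sorted_wrt (>) (us @ E1)" using t2 u by (auto simp: dsplit_def)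
    then have "\<forall>a\<in>set us. \<forall>b\<in>set E1. b < a" by (simp add: sorted_wrt_append)
    moreover have "last us \<in> set us" "hd E1 \<in> set E1" using \<open>us \<noteq> []\<close> \<open>E1 \<noteq> []\<close> by auto
    ultimately show False by fastforce
  qed
  have "length D1 = length D2" using *[OF assms] *[OF assms(2,1)] by (metis linorder_neqE_nat)
  moreover have "P1 @ D1 = P2 @ D2" using assms by (simp add: dsplit_def)
  ultimately show ?thesis by simp
qed

lemma st_set: "set (fst (st p xs stk out)) \<subseteq> set xs \<union> set stk"
  by (induction p xs stk out rule: st.induct) auto

lemma st_distinct: "distinct (out @ stk @ xs) \<Longrightarrow> distinct (snd (st p xs stk out) @ fst (st p xs stk out))"
proof -
  assume "distinct (out @ stk @ xs)"
  moreover have "mset (snd (st p xs stk out) @ fst (st p xs stk out)) = mset (out @ stk @ xs)"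
    using st_mset[of p xs stk out] by (simp add: ac_simps)
  ultimately show ?thesis using mset_eq_imp_distinct_iff by blast
qed

lemma st_split:
  assumes "p = pat_1_23" "\<forall>y\<in>set L1 \<union> set L2. m < y" "dsplit (fst (st p L1 [] [])) P D"
  shows "st p (L1 @ m # L2) [] [] = (fst (st p L2 [] []) @ m # D, snd (st p L1 [] []) @ P @ snd (st p L2 [] []))"
proof -
  have "st p (L1 @ m # L2) [] [] = st p (m # L2) (fst (st p L1 [] [])) (snd (st p L1 [] []))"
    by (simp add: st_append)
  also have "\<dots> = st p L2 (m # D) (snd (st p L1 [] []) @ P)"
  proof (rule st_flush[OF assms(1) _ assms(3)])
    show "\<forall>y\<in>set (fst (st p L1 [] [])). m < y" using assms(2) st_set[of p L1 "[]" "[]"] by auto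
  qed
  also have "\<dots> = st p L2 ([] @ m # D) (snd (st p L1 [] []) @ P)" by simp
  also have "\<dots> = (fst (st p L2 [] (snd (st p L1 [] []) @ P)) @ m # D, snd (st p L2 [] (snd (st p L1 [] []) @ P)))"
    apply (rule st_base[OF assms(1)])
    using assms(2,3) st_set[of p L1 "[]" "[]"] by (auto simp: dsplit_def)
  finally show ?thesis by (subst (asm) (1 2) st_out) simp
qed

abbreviation w21 :: vpattern where "w21 \<equiv> classical [2,1]"

lemmas c21' = c21[simplified]

lemma c21_base:
  assumes "\<forall>y\<in>set S. y < n"
  shows "contains (S @ [n]) w21 \<longleftrightarrow> contains S w21"
proof
  assume "contains (S @ [n]) w21"
  then obtain i j where h: "i < j" "j < length (S @ [n])" "(S @ [n])!j < (S @ [n])!i" by (auto simp: c21 c21')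
  have "j < length S"
  proof (rule ccontr)
    assume "\<not> j < length S"
    then have "j = length S" using h by simp
    then have "(S @ [n])!j = n" "(S @ [n])!i = S!i" using h by (auto simp: nth_append)
    moreover have "S!i \<in> set S" using h \<open>j = length S\<close> by simp
    ultimately show False using h assms by fastforce
  qed
  then show "contains S w21" unfolding c21
    apply - apply (rule exI[of _ i], rule exI[of _ j]) using h by (auto simp: nth_append)
next
  assume "contains S w21"
  then obtain i j where h: "i < j" "j < length S" "S!j < S!i" by (auto simp: c21 c21')
  show "contains (S @ [n]) w21" unfolding c21
    apply (rule exI[of _ i], rule exI[of _ j]) using h by (auto simp: nth_append)
qed

lemma w_base:
  assumes "p = w21" "\<forall>y\<in>set xs. y < n" "\<forall>y\<in>set stk. y < n"
  shows "st p xs (stk @ [n]) out = (fst (st p xs stk out) @ [n], snd (st p xs stk out))"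
  using assms
proof (induction p xs stk out rule: st.induct)
  case (1 p stk out)
  then show ?case by simp
next
  case (2 p x xs out)
  have "\<not> contains [x, n] w21" unfolding c21 using 2 by (auto simp: less_Suc_eq)
  then have "avoids (x # [n]) p" using 2 by (simp add: avoids_def)
  then show ?case using 2 by simp
next
  case (3 p x xs y ys out)
  have "avoids ((x # y # ys) @ [n]) p \<longleftrightarrow> avoids (x # y # ys) p"
    using 3(3-5) c21_base[of "x # y # ys" n] by (simp add: avoids_def)
  then show ?case using 3 by auto
qed

lemma w_flush:
  assumes "p = w21" "\<forall>y\<in>set stk. y < n"
  shows "st p (n # xs) stk out = st p xs [n] (out @ stk)"
  using assms
proof (induction stk arbitrary: out)
  case Nil
  then show ?case by simp
next
  case (Cons y ys)
  have "contains (n # y # ys) w21" unfolding c21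
    apply (rule exI[of _ 0], rule exI[of _ 1]) using Cons.prems by auto
  then have "st p (n # xs) (y # ys) out = st p (n # xs) ys (out @ [y])" using Cons.prems by (simp add: avoids_def)
  also have "\<dots> = st p xs [n] ((out @ [y]) @ ys)" using Cons by simp
  finally show ?case by simp
qed

lemma w_split:
  assumes "p = w21" "\<forall>y\<in>set L \<union> set R. y < n"
  shows "st p (L @ n # R) [] [] = (fst (st p R [] []) @ [n], snd (st p L [] []) @ fst (st p L [] []) @ snd (st p R [] []))"
proof -
  have "st p (L @ n # R) [] [] = st p (n # R) (fst (st p L [] [])) (snd (st p L [] []))"
    by (simp add: st_append)
  also have "\<dots> = st p R [n] (snd (st p L [] []) @ fst (st p L [] []))"
  proof (rule w_flush[OF assms(1)])
    show "\<forall>y\<in>set (fst (st p L [] [])). y < n" using assms(2) st_set[of p L "[]" "[]"] by auto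
  qed
  also have "\<dots> = st p R ([] @ [n]) (snd (st p L [] []) @ fst (st p L [] []))" by simp
  also have "\<dots> = (fst (st p R [] (snd (st p L [] []) @ fst (st p L [] []))) @ [n], snd (st p R [] (snd (st p L [] []) @ fst (st p L [] []))))"
    apply (rule w_base[OF assms(1)]) using assms(2) by auto
  finally show ?thesis by (subst (asm) (1 2) st_out) simp
qed

lemma west_split:
  assumes "\<forall>y\<in>set L \<union> set R. y < n"
  shows "west_s (L @ n # R) = west_s L @ west_s R @ [n]"
  using w_split[OF refl assms] unfolding west_s_def SC_def sc_run_st
  by (simp add: case_prod_beta)

lemma sc_run_mset: "mset (sc_run p xs [] []) = mset xs"
  using st_mset[of p xs "[]" "[]"] by (simp add: sc_run_st case_prod_beta)

lemma subseq_set_sub: "subseq xs ys \<Longrightarrow> set xs \<subseteq> set ys"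
  by (induction rule: list_emb.induct) auto

lemma subseq_distinct: "subseq xs ys \<Longrightarrow> distinct ys \<Longrightarrow> distinct xs"
  by (induction rule: list_emb.induct) (auto dest: subseq_set_sub)

lemma subseq_sorted_wrt: "subseq xs ys \<Longrightarrow> sorted_wrt P ys \<Longrightarrow> sorted_wrt P xs"
  by (induction rule: list_emb.induct) (auto dest: subseq_set_sub)

lemma idx_subseq:
  "sorted_wrt (<) idx \<Longrightarrow> \<forall>i\<in>set idx. i < length L \<Longrightarrow> subseq (map ((!) L) idx) L"
proof (induction L arbitrary: idx)
  case Nil
  then show ?case by (cases idx) auto
next
  case (Cons y L)
  show ?case
  proof (cases idx)
    case Nil
    then show ?thesis by simp
  next
    fix i idx' assume Cons2: "idx = i # idx'"
    have pos: "\<forall>j\<in>set idx'. 0 < j" using Cons.prems Cons2 by auto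
    have sh: "map ((!) (y # L)) idx' = map ((!) L) (map (\<lambda>j. j - 1) idx')"
      using pos by (auto simp: nth_Cons split: nat.split)
    have "sorted_wrt (<) idx'" using Cons.prems(1) Cons2 by simp
    then have so: "sorted_wrt (<) (map (\<lambda>j. j - 1) idx')"
      unfolding sorted_wrt_map by (rule sorted_wrt_mono_rel[rotated]) (use pos in auto)
    have bd: "\<forall>j\<in>set (map (\<lambda>j. j - 1) idx'). j < length L" using Cons.prems(2) pos Cons2 by auto
    have ih: "subseq (map ((!) L) (map (\<lambda>j. j - 1) idx')) L" using Cons.IH[OF so bd] .
    show ?thesis
    proof (cases i)
      case 0
      have e: "map ((!) (y # L)) idx = y # map ((!) L) (map (\<lambda>j. j - 1) idx')"
        using Cons2 0 sh by simp
      show ?thesis by (subst e) (rule subseq_Cons2[OF ih])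
    next
      case (Suc k)
      have pos': "\<forall>j\<in>set idx. 0 < j" using pos Cons2 Suc by auto
      have sh': "map ((!) (y # L)) idx = map ((!) L) (map (\<lambda>j. j - 1) idx)"
        using pos' by (auto simp: nth_Cons split: nat.split)
      have so': "sorted_wrt (<) (map (\<lambda>j. j - 1) idx)"
        unfolding sorted_wrt_map by (rule sorted_wrt_mono_rel[rotated, OF Cons.prems(1)]) (use pos' in auto)
      have bd': "\<forall>j\<in>set (map (\<lambda>j. j - 1) idx). j < length L" using Cons.prems(2) pos' by auto
      show ?thesis by (subst sh') (rule list_emb_Cons[OF Cons.IH[OF so' bd']])
    qed
  qed
qed

lemma subseq_idx:
  "subseq xs L \<Longrightarrow> \<exists>idx. sorted_wrt (<) idx \<and> (\<forall>i\<in>set idx. i < length L) \<and> xs = map ((!) L) idx"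
proof (induction rule: list_emb.induct)
  case (list_emb_Nil ys)
  then show ?case by (auto intro: exI[of _ "[]"])
next
  case (list_emb_Cons xs ys y)
  then obtain idx where "sorted_wrt (<) idx" "\<forall>i\<in>set idx. i < length ys" "xs = map ((!) ys) idx" by auto
  then show ?case by (intro exI[of _ "map Suc idx"]) (auto simp: sorted_wrt_map)
next
  case (list_emb_Cons2 x y xs ys)
  then obtain idx where "sorted_wrt (<) idx" "\<forall>i\<in>set idx. i < length ys" "xs = map ((!) ys) idx" by auto
  then show ?case using list_emb_Cons2 by (intro exI[of _ "0 # map Suc idx"]) (auto simp: sorted_wrt_map)
qed

lemma contains_classical: "contains L (classical \<sigma>) \<longleftrightarrow> (\<exists>xs. subseq xs L \<and> order_iso xs \<sigma>)"
proof
  assume "contains L (classical \<sigma>)"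
  then obtain idx where "sorted_wrt (<) idx" "\<forall>i\<in>set idx. i < length L" "order_iso (map ((!) L) idx) \<sigma>"
    unfolding contains_def classical_def by auto
  then show "\<exists>xs. subseq xs L \<and> order_iso xs \<sigma>" using idx_subseq by blast
next
  assume "\<exists>xs. subseq xs L \<and> order_iso xs \<sigma>"
  then obtain xs where "subseq xs L" "order_iso xs \<sigma>" by auto
  moreover obtain idx where "sorted_wrt (<) idx" "\<forall>i\<in>set idx. i < length L" "xs = map ((!) L) idx"
    using subseq_idx[OF \<open>subseq xs L\<close>] by auto
  ultimately show "contains L (classical \<sigma>)" unfolding contains_def classical_def
    by (intro exI[of _ idx]) (auto simp: order_iso_def)
qed

definition P132 :: "nat list \<Rightarrow> bool" where
  "P132 L \<longleftrightarrow> (\<exists>a b c. subseq [a,b,c] L \<and> a < c \<and> c < b)"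
definition PX :: "nat list \<Rightarrow> bool" where
  "PX L \<longleftrightarrow> (\<exists>a b c d. subseq [a,b,c,d] L \<and> c < b \<and> b < a \<and> b < d)"
definition P231 :: "nat list \<Rightarrow> bool" where
  "P231 L \<longleftrightarrow> (\<exists>a b c. subseq [a,b,c] L \<and> c < a \<and> a < b)"

lemma len3: "length xs = 3 \<Longrightarrow> \<exists>a b c. xs = [a,b,c]"
  by (auto simp: numeral_3_eq_3 length_Suc_conv)
lemma len4: "length xs = 4 \<Longrightarrow> \<exists>a b c d. xs = [a,b,c,d]"
  by (auto simp: eval_nat_numeral length_Suc_conv)

lemma contains_132: "contains L (classical [1,3,2]) \<longleftrightarrow> P132 L"
proof -
  have "order_iso [a,b,c] [1,3,2] \<longleftrightarrow> a < c \<and> c < b" for a b c :: nat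
    by (auto simp: order_iso_def All_less_Suc)
  moreover have "order_iso xs [1,3,2] \<Longrightarrow> \<exists>a b c. xs = [a,b,c]" for xs
    by (rule len3) (simp add: order_iso_def)
  ultimately show ?thesis unfolding contains_classical P132_def by metis
qed

lemma contains_X:
  assumes "distinct L"
  shows "contains L (classical [3,2,1,4]) \<or> contains L (classical [4,2,1,3]) \<longleftrightarrow> PX L"
proof -
  have o1: "order_iso [a,b,c,d] [3,2,1,4] \<longleftrightarrow> c < b \<and> b < a \<and> a < d" for a b c d :: nat
    by (auto simp: order_iso_def All_less_Suc)
  have o2: "order_iso [a,b,c,d] [4,2,1,3] \<longleftrightarrow> c < b \<and> b < d \<and> d < a" for a b c d :: nat
    by (auto simp: order_iso_def All_less_Suc)
  have l: "order_iso xs s \<Longrightarrow> length s = 4 \<Longrightarrow> \<exists>a b c d. xs = [a,b,c,d]" for xs s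
    by (rule len4) (simp add: order_iso_def)
  show ?thesis
  proof
    assume "contains L (classical [3,2,1,4]) \<or> contains L (classical [4,2,1,3])"
    then obtain xs s where xs: "subseq xs L" "order_iso xs s" "s = [3,2,1,4] \<or> s = [4,2,1,3]"
      unfolding contains_classical by blast
    have "length s = 4" using xs(3) by auto
    then obtain a b c d where "xs = [a,b,c,d]" using l[OF xs(2)] by auto
    then have "order_iso [a,b,c,d] [3,2,1,4] \<or> order_iso [a,b,c,d] [4,2,1,3]" using xs(2,3) by auto
    then have "c < b \<and> b < a \<and> b < d" unfolding o1 o2 by auto
    then show "PX L" unfolding PX_def using xs(1) \<open>xs = [a,b,c,d]\<close> by blast
  next
    assume "PX L"
    then obtain a b c d where h: "subseq [a,b,c,d] L" "c < b" "b < a" "b < d" unfolding PX_def by auto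
    then have "distinct [a,b,c,d]" using subseq_distinct assms by blast
    then have "a < d \<or> d < a" by auto
    then have "order_iso [a,b,c,d] [3,2,1,4] \<or> order_iso [a,b,c,d] [4,2,1,3]"
      using h o1 o2 by auto
    then show "contains L (classical [3,2,1,4]) \<or> contains L (classical [4,2,1,3])"
      unfolding contains_classical using h(1) by blast
  qed
qed

lemma subseq_single: "subseq z [m] \<longleftrightarrow> z = [] \<or> z = [m]"
proof (cases z)
  case (Cons x xs)
  then show ?thesis by (cases "x = m") auto
qed simp

lemma subseq_mid:
  assumes "subseq zs (L @ m # R)"
  shows "\<exists>z1 z2 z3. zs = z1 @ z2 @ z3 \<and> subseq z1 L \<and> (z2 = [] \<or> z2 = [m]) \<and> subseq z3 R"
proof -
  from assms have "subseq zs (L @ [m] @ R)" by simp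
  then obtain z1 w where "zs = z1 @ w" "subseq z1 L" "subseq w ([m] @ R)" by (rule subseq_appendE)
  moreover from \<open>subseq w ([m] @ R)\<close> obtain z2 z3 where "w = z2 @ z3" "subseq z2 [m]" "subseq z3 R"
    by (rule subseq_appendE)
  moreover have "z2 = [] \<or> z2 = [m]" using subseq_single[THEN iffD1, OF \<open>subseq z2 [m]\<close>] .
  ultimately show ?thesis by (intro exI[of _ z1] exI[of _ z2] exI[of _ z3]) simp
qed

lemma split3: "[a,b,c] = z1 @ w \<Longrightarrow> (z1 = [] \<and> w = [a,b,c]) \<or> (z1 = [a] \<and> w = [b,c]) \<or> (z1 = [a,b] \<and> w = [c]) \<or> (z1 = [a,b,c] \<and> w = [])"
  by (cases z1; cases "tl z1"; cases "tl (tl z1)"; auto)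

lemma split4: "[a,b,c,d] = z1 @ w \<Longrightarrow> (z1 = [] \<and> w = [a,b,c,d]) \<or> (z1 = [a] \<and> w = [b,c,d]) \<or> (z1 = [a,b] \<and> w = [c,d]) \<or> (z1 = [a,b,c] \<and> w = [d]) \<or> (z1 = [a,b,c,d] \<and> w = [])"
  by (cases z1; cases "tl z1"; cases "tl (tl z1)"; cases "tl (tl (tl z1))"; auto)

lemma mid_cases: "w = z2 @ z3 \<Longrightarrow> z2 = [] \<or> z2 = [m] \<Longrightarrow> z3 = w \<or> w = m # z3"
  by auto

lemma sub3:
  assumes "subseq [a,b,c] (L @ m # R)"
  shows "subseq [a,b,c] L \<or> (subseq [a,b] L \<and> (c = m \<or> c \<in> set R)) \<or>
    (a \<in> set L \<and> ((b = m \<and> c \<in> set R) \<or> subseq [b,c] R)) \<or> (a = m \<and> subseq [b,c] R) \<or> subseq [a,b,c] R"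
proof -
  obtain z1 z2 z3 where z: "[a,b,c] = z1 @ (z2 @ z3)" "subseq z1 L" "z2 = [] \<or> z2 = [m]" "subseq z3 R"
    using subseq_mid[OF assms] by metis
  have mc: "z3 = z2 @ z3 \<or> z2 @ z3 = m # z3" using mid_cases[OF refl z(3)] .
  from split3[OF z(1)] show ?thesis
  proof (elim disjE conjE)
    assume "z1 = []" "z2 @ z3 = [a,b,c]" then show ?thesis using mc z(4) by auto
  next
    assume "z1 = [a]" "z2 @ z3 = [b,c]" then show ?thesis using mc z(2,4) by (auto simp: subseq_singleton_left)
  next
    assume "z1 = [a,b]" "z2 @ z3 = [c]" then show ?thesis using mc z(2,4) by (auto simp: subseq_singleton_left)
  next
    assume "z1 = [a,b,c]" "z2 @ z3 = []" then show ?thesis using z(2) by auto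
  qed
qed

lemma sub4:
  assumes "subseq [a,b,c,d] (L @ m # R)"
  shows "subseq [a,b,c,d] L \<or> (subseq [a,b,c] L \<and> (d = m \<or> d \<in> set R)) \<or>
    (subseq [a,b] L \<and> ((c = m \<and> d \<in> set R) \<or> subseq [c,d] R)) \<or>
    (a \<in> set L \<and> ((b = m \<and> subseq [c,d] R) \<or> subseq [b,c,d] R)) \<or> (a = m \<and> subseq [b,c,d] R) \<or> subseq [a,b,c,d] R"
proof -
  obtain z1 z2 z3 where z: "[a,b,c,d] = z1 @ (z2 @ z3)" "subseq z1 L" "z2 = [] \<or> z2 = [m]" "subseq z3 R"
    using subseq_mid[OF assms] by metis
  have mc: "z3 = z2 @ z3 \<or> z2 @ z3 = m # z3" using mid_cases[OF refl z(3)] .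
  from split4[OF z(1)] show ?thesis
  proof (elim disjE conjE)
    assume "z1 = []" "z2 @ z3 = [a,b,c,d]" then show ?thesis using mc z(4) by auto
  next
    assume "z1 = [a]" "z2 @ z3 = [b,c,d]" then show ?thesis using mc z(2,4) by (auto simp: subseq_singleton_left)
  next
    assume "z1 = [a,b]" "z2 @ z3 = [c,d]" then show ?thesis using mc z(2,4) by (auto simp: subseq_singleton_left)
  next
    assume "z1 = [a,b,c]" "z2 @ z3 = [d]" then show ?thesis using mc z(2,4) by (auto simp: subseq_singleton_left)
  next
    assume "z1 = [a,b,c,d]" "z2 @ z3 = []" then show ?thesis using z(2) by auto
  qed
qed

lemma sub2_set: "subseq [a,b] L \<Longrightarrow> a \<in> set L \<and> b \<in> set L"
  using subseq_set_sub by fastforce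
lemma sub3_set: "subseq [a,b,c] L \<Longrightarrow> a \<in> set L \<and> b \<in> set L \<and> c \<in> set L"
  using subseq_set_sub by fastforce

lemma sorted_sub2: "sorted_wrt P L \<Longrightarrow> subseq [u,v] L \<Longrightarrow> P u v"
  using subseq_sorted_wrt by fastforce

lemma not_sorted_sub2: "\<not> sorted_wrt P L \<Longrightarrow> \<exists>u v. subseq [u,v] L \<and> \<not> P u v"
proof -
  assume "\<not> sorted_wrt P L"
  then obtain i j where h: "i < j" "j < length L" "\<not> P (L!i) (L!j)" by (auto simp: sorted_wrt_iff_nth_less)
  have "subseq (map ((!) L) [i,j]) L" by (rule idx_subseq) (use h in auto)
  then show ?thesis using h by auto
qed

lemma P231_mono: "subseq A B \<Longrightarrow> P231 A \<Longrightarrow> P231 B"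
  unfolding P231_def using subseq_order.trans by blast
lemma P132_mono: "subseq A B \<Longrightarrow> P132 A \<Longrightarrow> P132 B"
  unfolding P132_def using subseq_order.trans by blast
lemma PX_mono: "subseq A B \<Longrightarrow> PX A \<Longrightarrow> PX B"
  unfolding PX_def using subseq_order.trans by blast

lemma P231_Nil: "\<not> P231 []" by (auto simp: P231_def)

lemma west_Nil: "west_s [] = []" by (simp add: west_s_def SC_def)

lemma knuth: "distinct \<pi> \<Longrightarrow> sorted (west_s \<pi>) \<longleftrightarrow> \<not> P231 \<pi>"
proof (induction "length \<pi>" arbitrary: \<pi> rule: less_induct)
  case less
  show ?case
  proof (cases "\<pi> = []")
    case True
    then show ?thesis by (simp add: west_Nil P231_Nil)
  next
    case False
    define n where "n = Max (set \<pi>)"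
    have nin: "n \<in> set \<pi>" using False by (simp add: n_def)
    obtain L R where LR: "\<pi> = L @ n # R" using split_list[OF nin] by auto
    have lt: "\<forall>y\<in>set L \<union> set R. y < n"
    proof
      fix y assume y: "y \<in> set L \<union> set R"
      then have "y \<le> n" unfolding n_def using LR by simp
      moreover have "y \<noteq> n" using y less.prems LR by auto
      ultimately show "y < n" by simp
    qed
    have dL: "distinct L" and dR: "distinct R" and dLR: "set L \<inter> set R = {}" using less.prems LR by auto
    have ihL: "sorted (west_s L) \<longleftrightarrow> \<not> P231 L" using less.hyps[of L] LR dL by simp
    have ihR: "sorted (west_s R) \<longleftrightarrow> \<not> P231 R" using less.hyps[of R] LR dR by simp
    have sL: "set (west_s L) = set L" using sc_run_mset[of w21 L] unfolding west_s_def SC_def by (metis set_mset_mset)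
    have sR: "set (west_s R) = set R" using sc_run_mset[of w21 R] unfolding west_s_def SC_def by (metis set_mset_mset)
    have w: "west_s \<pi> = west_s L @ west_s R @ [n]" using west_split[OF lt] LR by simp
    have srt: "sorted (west_s \<pi>) \<longleftrightarrow> sorted (west_s L) \<and> sorted (west_s R) \<and> (\<forall>a\<in>set L. \<forall>c\<in>set R. \<not> c < a)"
      unfolding w using sL sR lt by (auto simp: sorted_append not_less intro: less_imp_le)
    have p: "P231 \<pi> \<longleftrightarrow> P231 L \<or> P231 R \<or> (\<exists>a\<in>set L. \<exists>c\<in>set R. c < a)"
    proof
      assume "P231 \<pi>"
      then obtain a b c where h: "subseq [a,b,c] (L @ n # R)" "c < a" "a < b" unfolding P231_def LR by auto
      from sub3[OF h(1)] show "P231 L \<or> P231 R \<or> (\<exists>a\<in>set L. \<exists>c\<in>set R. c < a)"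
      proof (elim disjE conjE)
        assume "subseq [a,b,c] L" then show ?thesis using h unfolding P231_def by blast
      next
        assume "subseq [a,b] L" "c = n"
        moreover have "a < n" using lt sub2_set[OF \<open>subseq [a,b] L\<close>] by auto
        ultimately show ?thesis using h by auto
      next
        assume "subseq [a,b] L" "c \<in> set R" then show ?thesis using h sub2_set[of a b L] by auto
      next
        assume "a \<in> set L" "b = n" "c \<in> set R" then show ?thesis using h by auto
      next
        assume "a \<in> set L" "subseq [b,c] R" then show ?thesis using h sub2_set[of b c R] by auto
      next
        assume "a = n" "subseq [b,c] R"
        moreover have "b < n" using lt sub2_set[OF \<open>subseq [b,c] R\<close>] by auto
        ultimately show ?thesis using h by auto
      next
        assume "subseq [a,b,c] R" then show ?thesis using h unfolding P231_def by blast
      qed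
    next
      assume "P231 L \<or> P231 R \<or> (\<exists>a\<in>set L. \<exists>c\<in>set R. c < a)"
      then consider "P231 L" | "P231 R" | "\<exists>a\<in>set L. \<exists>c\<in>set R. c < a" by blast
      then show "P231 \<pi>"
      proof cases
        case 1
        then show ?thesis using P231_mono[of L \<pi>] LR by (simp add: subseq_rev_drop_many)
      next
        case 2
        then show ?thesis using P231_mono[of R \<pi>] LR subseq_drop_many[of R R "L @ [n]"] by simp
      next
        case 3
        then obtain a c where ac: "a \<in> set L" "c \<in> set R" "c < a" by auto
        have "subseq ([a] @ [n, c]) (L @ (n # R))"
          by (rule list_emb_append_mono) (use ac in \<open>auto simp: subseq_singleton_left\<close>)
        then show ?thesis unfolding P231_def LR using ac lt by (intro exI[of _ a] exI[of _ n] exI[of _ c]) auto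
      qed
    qed
    show ?thesis using srt p ihL ihR by blast
  qed
qed

abbreviation SS :: "nat list \<Rightarrow> nat list \<times> nat list" where "SS L \<equiv> st pat_1_23 L [] []"

lemma SC_SS: "SC pat_1_23 L = snd (SS L) @ fst (SS L)"
  by (simp add: SC_def sc_run_st case_prod_beta)

lemma st_incr:
  "sorted_wrt (<) xs \<Longrightarrow> sorted_wrt (>) stk \<Longrightarrow> \<forall>x\<in>set xs. \<forall>s\<in>set stk. s < x \<Longrightarrow>
   st pat_1_23 xs stk out = (rev xs @ stk, out)"
proof (induction xs arbitrary: stk)
  case Nil
  then show ?case by simp
next
  case (Cons x xs)
  have "st pat_1_23 (x # xs) stk out = st pat_1_23 xs (x # stk) out"
  proof (cases stk)
    case (Cons y ys)
    then have "avoids (x # y # ys) pat_1_23" using avoids_dec Cons.prems(2) by simp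
    then show ?thesis using Cons by simp
  qed simp
  also have "\<dots> = (rev xs @ x # stk, out)"
    by (rule Cons.IH) (use Cons.prems in auto)
  finally show ?case by simp
qed

lemma sub_x_u_m_v: "u \<in> set A \<Longrightarrow> v \<in> set B \<Longrightarrow> subseq [x,u,m,v] (x # A @ m # B)"
proof -
  assume h: "u \<in> set A" "v \<in> set B"
  have "subseq ([u] @ [m,v]) (A @ (m # B))"
    by (rule list_emb_append_mono) (use h in \<open>auto simp: subseq_singleton_left\<close>)
  then show ?thesis by simp
qed

lemma sub_m_u_v: "subseq [u,v] B \<Longrightarrow> subseq [m,u,v] (A @ m # B)"
  by (rule subseq_drop_many) simp

lemma sub_prefix: "subseq L1 (L1 @ R)"
  by (rule subseq_rev_drop_many) simp

lemma min_split:
  fixes L :: "nat list"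
  assumes "distinct L" "L \<noteq> []"
  obtains L1 m L2 where "L = L1 @ m # L2" "\<forall>y\<in>set L1 \<union> set L2. m < y"
proof -
  define m where "m = Min (set L)"
  have mL: "m \<in> set L" using assms(2) by (simp add: m_def)
  obtain L1 L2 where LL: "L = L1 @ m # L2" using split_list[OF mL] by auto
  have "\<forall>y\<in>set L1 \<union> set L2. m < y"
  proof
    fix y assume y: "y \<in> set L1 \<union> set L2"
    then have "m \<le> y" unfolding m_def using LL by simp
    moreover have "y \<noteq> m" using y assms(1) LL by auto
    ultimately show "m < y" by simp
  qed
  then show ?thesis using that LL by blast
qed

lemma key:
  fixes L :: "nat list"
  assumes "distinct L" "L \<noteq> []" "\<not> P132 L" "\<not> PX L"
  shows "\<exists>Pre. dsplit (fst (SS L)) Pre (rev (takeWhile (\<lambda>y. hd L < y) (tl L)) @ [hd L]) \<and>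
     snd (SS L) @ Pre = rev (sort (dropWhile (\<lambda>y. hd L < y) (tl L)))"
  using assms
proof (induction "length L" arbitrary: L rule: less_induct)
  case less
  obtain L1 m L2 where LL: "L = L1 @ m # L2" and mlt: "\<forall>y\<in>set L1 \<union> set L2. m < y"
    using min_split[OF less.prems(1,2)] by metis
  have dL2: "distinct L2" using less.prems(1) LL by simp
  have L2s: "sorted_wrt (<) L2"
  proof (rule ccontr)
    assume "\<not> sorted_wrt (<) L2"
    then obtain u v where uv: "subseq [u,v] L2" "\<not> u < v" using not_sorted_sub2 by blast
    then have "u \<noteq> v" using subseq_distinct[OF uv(1) dL2] by simp
    then have "v < u" using uv by simp
    moreover have "m < v" using mlt sub2_set[OF uv(1)] by auto
    moreover have "subseq [m,u,v] L" unfolding LL by (rule sub_m_u_v[OF uv(1)])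
    ultimately show False using less.prems(3) unfolding P132_def by blast
  qed
  have st2: "SS L2 = (rev L2, [])" using st_incr[OF L2s] by simp
  show ?case
  proof (cases "L1 = []")
    case True
    then have hL: "hd L = m" "tl L = L2" using LL by auto
    have tw: "takeWhile (\<lambda>y. m < y) L2 = L2" and dw: "dropWhile (\<lambda>y. m < y) L2 = []" using mlt by auto
    have "SS L = st pat_1_23 L2 ([] @ m # []) []" using LL True by simp
    also have "\<dots> = (fst (SS L2) @ [m], snd (SS L2))"
      by (rule st_base[OF refl]) (use mlt in auto)
    finally have "SS L = (rev L2 @ [m], [])" using st2 by simp
    moreover have "sorted_wrt (>) (rev L2 @ [m])" using L2s mlt by (simp add: sorted_wrt_append sorted_wrt_rev)
    ultimately show ?thesis unfolding hL tw dw by (intro exI[of _ "[]"]) (simp add: dsplit_def)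
  next
    case False
    then obtain x rest1 where L1: "L1 = x # rest1" by (cases L1) auto
    define I1 where "I1 = takeWhile (\<lambda>y. x < y) rest1"
    define R1 where "R1 = dropWhile (\<lambda>y. x < y) rest1"
    have r1: "rest1 = I1 @ R1" unfolding I1_def R1_def by simp
    have sub1: "subseq L1 L" unfolding LL by (rule sub_prefix)
    have "\<exists>Pre. dsplit (fst (SS L1)) Pre (rev (takeWhile (\<lambda>y. hd L1 < y) (tl L1)) @ [hd L1]) \<and>
       snd (SS L1) @ Pre = rev (sort (dropWhile (\<lambda>y. hd L1 < y) (tl L1)))"
    proof (rule less.hyps)
      show "length L1 < length L" using LL by simp
      show "distinct L1" using less.prems(1) LL by simp
      show "L1 \<noteq> []" by fact
      show "\<not> P132 L1" using P132_mono[OF sub1] less.prems(3) by blast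
      show "\<not> PX L1" using PX_mono[OF sub1] less.prems(4) by blast
    qed
    then have "\<exists>Pre. dsplit (fst (SS L1)) Pre (rev I1 @ [x]) \<and> snd (SS L1) @ Pre = rev (sort R1)"
      unfolding I1_def R1_def L1 by simp
    then obtain Pre1 where d1: "dsplit (fst (SS L1)) Pre1 (rev I1 @ [x])"
      and o1: "snd (SS L1) @ Pre1 = rev (sort R1)" by blast
    have xm: "m < x" using mlt L1 by simp
    have I1x: "\<forall>i\<in>set I1. x < i" unfolding I1_def by (auto dest: set_takeWhileD)
    have I1m: "\<forall>i\<in>set I1. m < i" using I1x xm by auto
    have R1m: "\<forall>r\<in>set R1. m < r" using mlt L1 r1 by auto
    have dL: "distinct (x # I1 @ R1 @ m # L2)" using less.prems(1) LL L1 r1 by simp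
    have hR1: "R1 \<noteq> [] \<Longrightarrow> hd R1 < x"
    proof -
      assume "R1 \<noteq> []"
      then have "\<not> x < hd R1" unfolding R1_def using hd_dropWhile by metis
      moreover have "hd R1 \<noteq> x" using dL \<open>R1 \<noteq> []\<close> by (cases R1) auto
      ultimately show "hd R1 < x" by simp
    qed
    have cross: "\<forall>b\<in>set L2. \<forall>r\<in>set R1. b < r"
    proof (intro ballI, rule ccontr)
      fix b r assume br: "b \<in> set L2" "r \<in> set R1" "\<not> b < r"
      then have rb: "r < b" using dL by (cases "r = b") auto
      have R1ne: "R1 \<noteq> []" using br by auto
      have Ls: "L = x # (I1 @ R1) @ m # L2" using LL L1 r1 by simp
      show False
      proof (cases "r < x")
        case True
        have "subseq [x, r, m, b] L" unfolding Ls by (rule sub_x_u_m_v) (use br in auto)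
        then show False using less.prems(4) True rb R1m br unfolding PX_def by blast
      next
        case False
        then have "x < r" using dL br by (cases "r = x") auto
        have "hd R1 \<in> set R1" using R1ne by simp
        then have "subseq [x, hd R1, m, b] L" unfolding Ls by (intro sub_x_u_m_v) (use br in auto)
        moreover have "hd R1 < x" using hR1 R1ne by simp
        moreover have "m < hd R1" using R1m \<open>hd R1 \<in> set R1\<close> by simp
        ultimately show False using less.prems(4) rb \<open>x < r\<close> unfolding PX_def by (meson order.strict_trans)
      qed
    qed
    have D1s: "sorted_wrt (>) (rev I1 @ [x])" using d1 by (simp add: dsplit_def)
    have hdD1: "m < hd (rev I1 @ [x])" using I1m xm by (cases "rev I1") (auto dest: arg_cong[of _ _ set])
    have "SS L = (fst (SS L2) @ m # (rev I1 @ [x]), snd (SS L1) @ Pre1 @ snd (SS L2))"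
      unfolding LL by (rule st_split[OF refl mlt d1])
    then have SSL: "SS L = (rev L2 @ m # (rev I1 @ [x]), snd (SS L1) @ Pre1)" using st2 by simp
    have hL: "hd L = x" "tl L = rest1 @ m # L2" using LL L1 by auto
    have tw: "takeWhile (\<lambda>y. x < y) (rest1 @ m # L2) = I1"
      unfolding I1_def using xm by (simp add: takeWhile_tail)
    have dw: "dropWhile (\<lambda>y. x < y) (rest1 @ m # L2) = R1 @ m # L2"
      unfolding R1_def using xm by (simp add: dropWhile_append3)
    have srt: "sort (R1 @ m # L2) = m # L2 @ sort R1"
    proof (rule properties_for_sort)
      show "mset (m # L2 @ sort R1) = mset (R1 @ m # L2)" by simp
      show "sorted (m # L2 @ sort R1)"
        using mlt R1m cross strict_sorted_imp_sorted[OF L2s]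
        by (auto simp: sorted_append less_imp_le)
    qed
    show ?thesis
    proof (intro exI conjI)
      show "dsplit (fst (SS L)) (rev L2 @ [m]) (rev (takeWhile (\<lambda>y. hd L < y) (tl L)) @ [hd L])"
        unfolding SSL hL tw using D1s hdD1 by (simp add: dsplit_def)
      show "snd (SS L) @ rev L2 @ [m] = rev (sort (dropWhile (\<lambda>y. hd L < y) (tl L)))"
        unfolding SSL hL dw srt using o1 by simp
    qed
  qed
qed

lemma SS_set: "set (snd (SS L) @ fst (SS L)) = set L"
proof -
  have "mset (snd (SS L) @ fst (SS L)) = mset L" using st_mset[of pat_1_23 L "[]" "[]"] by simp
  then show ?thesis by (rule mset_eq_setD)
qed

lemma SC_set: "set (SC pat_1_23 L) = set L"
  using SS_set SC_SS by simp

lemma SS_distinct: "distinct L \<Longrightarrow> distinct (snd (SS L) @ fst (SS L))"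
  using st_distinct[of "[]" "[]" L pat_1_23] by simp

lemma SS_Nil: "SS [] = ([], [])" by simp

lemma SC_decomp:
  assumes "distinct L" "L = L1 @ m # L2" "\<forall>y\<in>set L1 \<union> set L2. m < y"
  obtains P D where "dsplit (fst (SS L1)) P D"
    "SC pat_1_23 L = snd (SS L1) @ P @ SC pat_1_23 L2 @ m # D"
    "SC pat_1_23 L1 = snd (SS L1) @ P @ D"
proof -
  have "distinct (fst (SS L1))" using SS_distinct[of L1] assms(1,2) by simp
  then obtain P D where d: "dsplit (fst (SS L1)) P D" using dsplit_exists by blast
  have "SS L = (fst (SS L2) @ m # D, snd (SS L1) @ P @ snd (SS L2))"
    unfolding assms(2) by (rule st_split[OF refl assms(3) d])
  then have "SC pat_1_23 L = snd (SS L1) @ P @ SC pat_1_23 L2 @ m # D" by (simp add: SC_SS)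
  moreover have "SC pat_1_23 L1 = snd (SS L1) @ P @ D" using d by (simp add: SC_SS dsplit_def)
  ultimately show ?thesis using that d by blast
qed

lemma sc_dec_incr: "distinct L \<Longrightarrow> sorted_wrt (>) (SC pat_1_23 L) \<Longrightarrow> sorted_wrt (<) L"
proof (induction "length L" arbitrary: L rule: less_induct)
  case less
  show ?case
  proof (cases "L = []")
    case False
    obtain L1 m L2 where LL: "L = L1 @ m # L2" and mlt: "\<forall>y\<in>set L1 \<union> set L2. m < y"
      using min_split[OF less.prems(1) False] by metis
    obtain P D where d: "dsplit (fst (SS L1)) P D" and sc: "SC pat_1_23 L = snd (SS L1) @ P @ SC pat_1_23 L2 @ m # D"
      using SC_decomp[OF less.prems(1) LL mlt] by metis
    show ?thesis
    proof (cases "L1 = []")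
      case True
      then have "P = []" "D = []" using d by (auto simp: dsplit_def)
      then have "SC pat_1_23 L = SC pat_1_23 L2 @ [m]" using sc True by simp
      then have "sorted_wrt (>) (SC pat_1_23 L2)" using less.prems(2) by (simp add: sorted_wrt_append)
      then have "sorted_wrt (<) L2" using less.hyps[of L2] less.prems(1) LL by simp
      then show ?thesis using LL True mlt by simp
    next
      case False
      then have ne: "fst (SS L1) \<noteq> []" using st_nonempty by blast
      then have "D \<noteq> []" using d by (cases P) (auto simp: dsplit_def)
      then have "hd D \<in> set (fst (SS L1))" using d by (auto simp: dsplit_def)
      then have "hd D \<in> set L1" using st_set[of pat_1_23 L1 "[]" "[]"] by auto
      then have "m < hd D" using mlt by auto
      moreover have "sorted_wrt (>) (m # D)" using less.prems(2) sc by (simp add: sorted_wrt_append)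
      ultimately show ?thesis using \<open>D \<noteq> []\<close> by (cases D) auto
    qed
  qed simp
qed

lemma I_sorted:
  assumes "distinct (x # rest)" "\<not> P132 (x # rest)"
  shows "sorted_wrt (<) (takeWhile (\<lambda>y. x < y) rest)"
proof (rule ccontr)
  let ?I = "takeWhile (\<lambda>y. x < y) rest"
  assume "\<not> sorted_wrt (<) ?I"
  then obtain u v where uv: "subseq [u,v] ?I" "\<not> u < v" using not_sorted_sub2 by blast
  have "distinct ?I" using assms(1) by (simp add: distinct_takeWhile)
  then have "u \<noteq> v" using subseq_distinct[OF uv(1)] by simp
  then have "v < u" using uv by simp
  moreover have "x < v" using sub2_set[OF uv(1)] by (auto dest: set_takeWhileD)
  moreover have "subseq [u,v] rest" using uv(1) subseq_order.trans[OF _ subseq_rev_drop_many[of ?I ?I "dropWhile (\<lambda>y. x < y) rest"]] by simp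
  then have "subseq [x,u,v] (x # rest)" by simp
  ultimately show False using assms(2) unfolding P132_def by blast
qed

lemma av_imp:
  assumes "distinct L" "\<not> P132 L" "\<not> PX L"
  shows "\<not> P231 (SC pat_1_23 L)"
proof (cases L)
  case Nil
  then show ?thesis by (simp add: SC_SS P231_Nil)
next
  case (Cons x rest)
  define I where "I = takeWhile (\<lambda>y. x < y) rest"
  define R where "R = dropWhile (\<lambda>y. x < y) rest"
  obtain Pre where d: "dsplit (fst (SS L)) Pre (rev I @ [x])" and o: "snd (SS L) @ Pre = rev (sort R)"
    using key[OF assms(1) _ assms(2,3)] Cons unfolding I_def R_def by auto
  have sc: "SC pat_1_23 L = rev (sort R) @ (rev I @ [x])"
    using d o by (simp add: SC_SS dsplit_def)
  have Is: "sorted_wrt (<) I" unfolding I_def using I_sorted assms Cons by simp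
  have Ix: "\<forall>i\<in>set I. x < i" unfolding I_def by (auto dest: set_takeWhileD)
  have dR: "distinct R" using assms(1) Cons unfolding R_def by (simp add: distinct_dropWhile)
  have As: "sorted_wrt (>) (rev (sort R))" using dR by (simp add: sorted_wrt_rev strict_sorted_iff)
  have Bs: "sorted_wrt (>) (rev I @ [x])" using Is Ix by (simp add: sorted_wrt_append sorted_wrt_rev)
  have rest: "rest = I @ R" unfolding I_def R_def by simp
  show ?thesis
  proof
    assume "P231 (SC pat_1_23 L)"
    then obtain a b c where h: "subseq [a,b,c] (rev (sort R) @ (rev I @ [x]))" "c < a" "a < b"
      unfolding P231_def sc by blast
    obtain z1 z2 where z: "[a,b,c] = z1 @ z2" "subseq z1 (rev (sort R))" "subseq z2 (rev I @ [x])"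
      by (rule subseq_appendE[OF h(1)])
    from split3[OF z(1)] show False
    proof (elim disjE conjE)
      assume "z1 = []" "z2 = [a,b,c]"
      then have "subseq [a,b,c] (rev I @ [x])" using z by simp
      then have "sorted_wrt (>) [a,b,c]" using subseq_sorted_wrt[OF _ Bs] by blast
      then show False using h by simp
    next
      assume "z1 = [a,b]" "z2 = [c]"
      then have "subseq [a,b] (rev (sort R))" using z by simp
      then have "sorted_wrt (>) [a,b]" using subseq_sorted_wrt[OF _ As] by blast
      then show False using h by simp
    next
      assume "z1 = [a,b,c]" "z2 = []"
      then have "subseq [a,b,c] (rev (sort R))" using z by simp
      then have "sorted_wrt (>) [a,b,c]" using subseq_sorted_wrt[OF _ As] by blast
      then show False using h by simp
    next
      assume z1: "z1 = [a]" "z2 = [b,c]"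
      then have aR: "a \<in> set R" using z(2) by (simp add: subseq_singleton_left)
      have "subseq [b,c] (rev I @ [x])" using z(3) z1 by simp
      note sub2_set[OF this]
      then have bc: "b \<in> set (rev I @ [x])" "c \<in> set (rev I @ [x])" by (rule conjunct1, rule conjunct2)
      have "x \<le> c"
      proof (cases "c = x")
        case False
        then have "c \<in> set I" using bc(2) by simp
        then show ?thesis using Ix by (simp add: less_imp_le)
      qed simp
      then have "b \<noteq> x" using h by simp
      then have bI: "b \<in> set I" using bc(1) by simp
      have "subseq ([x] @ [b] @ [a]) ([x] @ I @ R)"
        by (intro list_emb_append_mono) (use aR bI in \<open>auto simp: subseq_singleton_left\<close>)
      then have "subseq [x,b,a] L" using Cons rest by simp
      moreover have "x < a" using \<open>x \<le> c\<close> h by simp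
      ultimately have "P132 L" unfolding P132_def using h(3) by blast
      then show False using assms(2) by simp
    qed
  qed
qed

lemma sorted_noP: "sorted_wrt (<) L \<Longrightarrow> \<not> P132 L \<and> \<not> PX L"
proof -
  assume s: "sorted_wrt (<) L"
  have "\<not> P132 L"
  proof
    assume "P132 L"
    then obtain a b c where h: "subseq [a,b,c] L" "a < c" "c < b" unfolding P132_def by blast
    have "sorted_wrt (<) [a,b,c]" using subseq_sorted_wrt[OF h(1) s] .
    then show False using h by simp
  qed
  moreover have "\<not> PX L"
  proof
    assume "PX L"
    then obtain a b c d where h: "subseq [a,b,c,d] L" "c < b" "b < a" "b < d" unfolding PX_def by blast
    have "sorted_wrt (<) [a,b,c,d]" using subseq_sorted_wrt[OF h(1) s] .
    then show False using h by simp
  qed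
  ultimately show ?thesis by simp
qed

lemma g_imp: "distinct L \<Longrightarrow> \<not> P231 (SC pat_1_23 L) \<Longrightarrow> \<not> P132 L \<and> \<not> PX L"
proof (induction "length L" arbitrary: L rule: less_induct)
  case less
  show ?case
  proof (cases "L = []")
    case True
    then show ?thesis using sorted_noP by simp
  next
    case False
    obtain L1 m L2 where LL: "L = L1 @ m # L2" and mlt: "\<forall>y\<in>set L1 \<union> set L2. m < y"
      using min_split[OF less.prems(1) False] by metis
    obtain P D where d: "dsplit (fst (SS L1)) P D"
      and sc: "SC pat_1_23 L = snd (SS L1) @ P @ SC pat_1_23 L2 @ m # D"
      and sc1: "SC pat_1_23 L1 = snd (SS L1) @ P @ D"
      using SC_decomp[OF less.prems(1) LL mlt] by metis
    have dL2: "distinct L2" using less.prems(1) LL by simp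
    have dS2: "distinct (SC pat_1_23 L2)" using SS_distinct[OF dL2] by (simp add: SC_SS)
    have S2dec: "sorted_wrt (>) (SC pat_1_23 L2)"
    proof (rule ccontr)
      assume "\<not> sorted_wrt (>) (SC pat_1_23 L2)"
      then obtain u v where uv: "subseq [u,v] (SC pat_1_23 L2)" "\<not> v < u" using not_sorted_sub2 by blast
      have "u \<noteq> v" using subseq_distinct[OF uv(1) dS2] by simp
      then have "u < v" using uv by simp
      have "u \<in> set L2" using sub2_set[OF uv(1)] SC_set[of L2] by simp
      then have "m < u" using mlt by simp
      have "subseq ([u,v] @ [m]) ((snd (SS L1) @ P) @ SC pat_1_23 L2 @ ([m] @ D))"
        by (rule subseq_drop_many, rule list_emb_append_mono[OF uv(1)]) (simp add: subseq_rev_drop_many)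
      then have "subseq [u,v,m] (SC pat_1_23 L)" using sc by simp
      then have "P231 (SC pat_1_23 L)" unfolding P231_def using \<open>m < u\<close> \<open>u < v\<close> by blast
      then show False using less.prems(2) by simp
    qed
    have L2s: "sorted_wrt (<) L2" by (rule sc_dec_incr[OF dL2 S2dec])
    have SC2: "SC pat_1_23 L2 = rev L2" using st_incr[OF L2s] by (simp add: SC_SS)
    show ?thesis
    proof (cases "L1 = []")
      case True
      then have "sorted_wrt (<) L" using LL L2s mlt by simp
      then show ?thesis by (rule sorted_noP)
    next
      case False
      then obtain x rest1 where L1: "L1 = x # rest1" by (cases L1) auto
      define I1 where "I1 = takeWhile (\<lambda>y. x < y) rest1"
      define R1 where "R1 = dropWhile (\<lambda>y. x < y) rest1"
      have r1: "rest1 = I1 @ R1" unfolding I1_def R1_def by simp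
      have dL1: "distinct L1" using less.prems(1) LL by simp
      have "subseq (SC pat_1_23 L1) (SC pat_1_23 L)"
        unfolding sc sc1 by (rule list_emb_append_mono[OF subseq_order.refl]) (rule list_emb_append_mono[OF subseq_order.refl], rule subseq_drop_many, rule subseq_drop_many[of D D "[m]", simplified])
      then have "\<not> P231 (SC pat_1_23 L1)" using P231_mono less.prems(2) by blast
      then have av1: "\<not> P132 L1 \<and> \<not> PX L1" using less.hyps[of L1] LL dL1 by simp
      obtain Pre1 where d1: "dsplit (fst (SS L1)) Pre1 (rev I1 @ [x])"
        and o1: "snd (SS L1) @ Pre1 = rev (sort R1)"
        using key[OF dL1 False] av1 L1 unfolding I1_def R1_def by auto
      have "P = Pre1 \<and> D = rev I1 @ [x]" using dsplit_unique[OF d d1] .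
      then have scL: "SC pat_1_23 L = rev (sort R1) @ rev L2 @ m # rev I1 @ [x]"
        using sc o1 SC2 by simp
      have dL: "distinct (x # I1 @ R1 @ m # L2)" using less.prems(1) LL L1 r1 by simp
      have I1x: "\<forall>i\<in>set I1. x < i" unfolding I1_def by (auto dest: set_takeWhileD)
      have I1s: "sorted_wrt (<) I1" unfolding I1_def using I_sorted dL1 av1 L1 by simp
      have R1m: "\<forall>r\<in>set R1. m < r" using mlt L1 r1 by auto
      have hR1: "R1 \<noteq> [] \<Longrightarrow> hd R1 < x"
      proof -
        assume "R1 \<noteq> []"
        then have "\<not> x < hd R1" unfolding R1_def using hd_dropWhile by metis
        moreover have "hd R1 \<noteq> x" using dL \<open>R1 \<noteq> []\<close> by (cases R1) auto
        ultimately show "hd R1 < x" by simp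
      qed
      have f1: "\<forall>r\<in>set R1. \<forall>b\<in>set L2. b < r"
      proof (intro ballI, rule ccontr)
        fix r b assume rb: "r \<in> set R1" "b \<in> set L2" "\<not> b < r"
        then have "r < b" using dL by (cases "r = b") auto
        have "subseq ([r] @ [b] @ [m]) (rev (sort R1) @ rev L2 @ ([m] @ rev I1 @ [x]))"
          by (intro list_emb_append_mono) (use rb in \<open>auto simp: subseq_singleton_left\<close>)
        then have "subseq [r,b,m] (SC pat_1_23 L)" unfolding scL by simp
        moreover have "m < r" using R1m rb by simp
        ultimately have "P231 (SC pat_1_23 L)" unfolding P231_def using \<open>r < b\<close> by blast
        then show False using less.prems(2) by simp
      qed
      have f2: "\<forall>b\<in>set L2. \<forall>i\<in>set I1. \<not> (x < b \<and> b < i)"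
      proof (intro ballI notI)
        fix b i assume bi: "b \<in> set L2" "i \<in> set I1" "x < b \<and> b < i"
        have "subseq ([b] @ [i] @ [x]) ((rev (sort R1) @ rev L2) @ (m # rev I1) @ [x])"
          by (intro list_emb_append_mono) (use bi in \<open>auto simp: subseq_singleton_left intro: subseq_drop_many\<close>)
        then have "subseq [b,i,x] (SC pat_1_23 L)" unfolding scL by simp
        then have "P231 (SC pat_1_23 L)" unfolding P231_def using bi(3) by blast
        then show False using less.prems(2) by simp
      qed
      have setL1: "set L1 = {x} \<union> set I1 \<union> set R1" using L1 r1 by auto
      have cross132: False if "a \<in> set L1" "b \<in> set L1" "c \<in> set L2" "a < c" "c < b" for a b c
      proof (cases "a \<in> set R1")
        case True
        have "c < a" using f1[rule_format, OF True that(3)] .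
        then show False using that(4) by simp
      next
        case False
        then have "a = x \<or> a \<in> set I1" using that(1) setL1 by simp
        then have "x \<le> a" using I1x by (auto intro: less_imp_le)
        have "b \<in> set R1 \<or> b \<in> set I1 \<or> b = x" using that(2) setL1 by auto
        then consider "b \<in> set R1" | "b \<in> set I1" | "b = x" by blast
        then show False
        proof cases
          case 1
          then have "R1 \<noteq> []" by auto
          then have "hd R1 < x" "hd R1 \<in> set R1" using hR1 by auto
          moreover have "c < hd R1" using f1[rule_format, OF \<open>hd R1 \<in> set R1\<close> that(3)] .
          ultimately show False using that(4) \<open>x \<le> a\<close> by linarith
        next
          case 2
          have "\<not> (x < c \<and> c < b)" using f2[rule_format, OF that(3) 2] .
          then show False using that(4,5) \<open>x \<le> a\<close> by linarith
        next
          case 3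
          then show False using that(4,5) \<open>x \<le> a\<close> by simp
        qed
      qed
      have crossX: False if "subseq [p,q] L1" "q < p" "d \<in> set L2" "q < d" for p q d
      proof (cases "q \<in> set R1")
        case True
        have "d < q" using f1[rule_format, OF True that(3)] .
        then show False using that(4) by simp
      next
        case qR: False
        show False
        proof (cases "p = x")
          case True
          then have "subseq [q] (I1 @ R1)" using that(1) L1 r1 by simp
          then have "q \<in> set I1" using qR by (auto simp: subseq_singleton_left)
          then have "x < q" using I1x by simp
          then show False using True that(2) by simp
        next
          case False
          have pq: "subseq [p,q] (I1 @ R1)" using that(1) L1 r1 False by simp
          obtain z1 z2 where z: "[p,q] = z1 @ z2" "subseq z1 I1" "subseq z2 R1"
            by (rule subseq_appendE[OF pq])
          have "z1 = [] \<and> z2 = [p,q] \<or> z1 = [p] \<and> z2 = [q] \<or> z1 = [p,q] \<and> z2 = []"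
            using z(1) by (cases z1; cases "tl z1"; auto)
          then show False
          proof (elim disjE conjE)
            assume "z1 = []" "z2 = [p,q]"
            then have "subseq [p,q] R1" using z by simp
            then show False using qR sub2_set[OF \<open>subseq [p,q] R1\<close>] by simp
          next
            assume "z1 = [p]" "z2 = [q]"
            then show False using qR z by (simp add: subseq_singleton_left)
          next
            assume "z1 = [p,q]" "z2 = []"
            then have "subseq [p,q] I1" using z by simp
            then have "p < q" using sorted_sub2[OF I1s] by blast
            then show False using that(2) by simp
          qed
        qed
      qed
      have n132: "\<not> P132 L"
      proof
        assume "P132 L"
        then obtain a b c where h: "subseq [a,b,c] (L1 @ m # L2)" "a < c" "c < b" unfolding P132_def LL by blast
        from sub3[OF h(1)] show False
        proof (elim disjE conjE)
          assume "subseq [a,b,c] L1" then show False using av1 h unfolding P132_def by blast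
        next
          assume "subseq [a,b] L1" "c = m"
          then have "a \<in> set L1" using sub2_set[OF \<open>subseq [a,b] L1\<close>] by simp
          then have "m < a" using mlt by simp
          then show False using h \<open>c = m\<close> by simp
        next
          assume "subseq [a,b] L1" "c \<in> set L2"
          then show False using cross132[of a b c] h sub2_set[OF \<open>subseq [a,b] L1\<close>] by simp
        next
          assume "a \<in> set L1" "b = m" "c \<in> set L2"
          then have "m < c" using mlt by simp
          then show False using h \<open>b = m\<close> by simp
        next
          assume "a \<in> set L1" "subseq [b,c] L2"
          then show False using sorted_sub2[OF L2s] h by fastforce
        next
          assume "a = m" "subseq [b,c] L2"
          then show False using sorted_sub2[OF L2s] h by fastforce
        next
          assume "subseq [a,b,c] L2"
          then have "subseq [b,c] L2" by (metis subseq_Cons')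
          then show False using sorted_sub2[OF L2s] h by fastforce
        qed
      qed
      have nX: "\<not> PX L"
      proof
        assume "PX L"
        then obtain a b c d where h: "subseq [a,b,c,d] (L1 @ m # L2)" "c < b" "b < a" "b < d"
          unfolding PX_def LL by blast
        from sub4[OF h(1)] show False
        proof (elim disjE conjE)
          assume "subseq [a,b,c,d] L1" then show False using av1 h unfolding PX_def by blast
        next
          assume s: "subseq [a,b,c] L1" "d = m"
          then have "b \<in> set L1" using sub3_set[OF s(1)] by simp
          then have "m < b" using mlt by simp
          then show False using h s by simp
        next
          assume s: "subseq [a,b,c] L1" "d \<in> set L2"
          have "subseq [a,b] L1" using s(1) subseq_order.trans[of "[a,b]" "[a,b,c]" L1] by simp
          then show False using crossX h s by blast
        next
          assume s: "subseq [a,b] L1" "c = m" "d \<in> set L2"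
          then show False using crossX h by blast
        next
          assume s: "subseq [a,b] L1" "subseq [c,d] L2"
          then have "d \<in> set L2" using sub2_set[OF s(2)] by simp
          then show False using crossX h s by blast
        next
          assume s: "a \<in> set L1" "b = m" "subseq [c,d] L2"
          then have "c \<in> set L2" using sub2_set[OF s(3)] by simp
          then have "m < c" using mlt by simp
          then show False using h s by simp
        next
          assume s: "a \<in> set L1" "subseq [b,c,d] L2"
          then have "subseq [b,c] L2" using subseq_order.trans[of "[b,c]" "[b,c,d]" L2] by simp
          then show False using sorted_sub2[OF L2s] h by fastforce
        next
          assume s: "a = m" "subseq [b,c,d] L2"
          then have "subseq [b,c] L2" using subseq_order.trans[of "[b,c]" "[b,c,d]" L2] by simp
          then show False using sorted_sub2[OF L2s] h by fastforce
        next
          assume s: "subseq [a,b,c,d] L2"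
          then have "subseq [b,c] L2" using subseq_order.trans[of "[b,c]" "[a,b,c,d]" L2] by simp
          then show False using sorted_sub2[OF L2s] h by fastforce
        qed
      qed
      show ?thesis using n132 nX by simp
    qed
  qed
qed

theorem mainTheorem1:
  fixes n :: nat
  assumes "n \<ge> 1"
  shows "Sort n pat_1_23 = Av n [classical [1,3,2], classical [3,2,1,4], classical [4,2,1,3]]"
proof -
  have "\<tau> \<in> Sort n pat_1_23 \<longleftrightarrow> \<tau> \<in> Av n [classical [1,3,2], classical [3,2,1,4], classical [4,2,1,3]]" for \<tau>
  proof (cases "\<tau> \<in> perms n")
    case False
    then show ?thesis unfolding Sort_def Av_def mem_Collect_eq by blast
  next
    case True
    then have d\<tau>: "distinct \<tau>" and s\<tau>: "set \<tau> = {1..n}" by (auto simp: perms_def)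
    define \<pi> where "\<pi> = SC pat_1_23 \<tau>"
    have d\<pi>: "distinct \<pi>" unfolding \<pi>_def using SS_distinct[OF d\<tau>] by (simp add: SC_SS)
    have s\<pi>: "set \<pi> = {1..n}" unfolding \<pi>_def using SC_set s\<tau> by simp
    have mw: "mset (west_s \<pi>) = mset \<pi>" unfolding west_s_def SC_def by (rule sc_run_mset)
    have dw: "distinct (west_s \<pi>)" using d\<pi> mw mset_eq_imp_distinct_iff by blast
    have sw: "set (west_s \<pi>) = {1..n}" using s\<pi> mw mset_eq_setD by blast
    have "west_s \<pi> = [1..<n+1] \<longleftrightarrow> sorted (west_s \<pi>)"
    proof
      assume so: "sorted (west_s \<pi>)"
      have e: "set (west_s \<pi>) = set [1..<n+1]" unfolding set_upt using sw by fastforce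
      show "west_s \<pi> = [1..<n+1]"
        by (rule sorted_distinct_set_unique[OF so dw _ _ e]) (rule sorted_upt, rule distinct_upt)
    next
      assume "west_s \<pi> = [1..<n+1]"
      then show "sorted (west_s \<pi>)" by (simp only: sorted_upt)
    qed
    also have "\<dots> \<longleftrightarrow> \<not> P231 \<pi>" by (rule knuth[OF d\<pi>])
    also have "\<dots> \<longleftrightarrow> \<not> P132 \<tau> \<and> \<not> PX \<tau>"
    proof
      assume "\<not> P231 \<pi>" then show "\<not> P132 \<tau> \<and> \<not> PX \<tau>" unfolding \<pi>_def by (rule g_imp[OF d\<tau>])
    next
      assume "\<not> P132 \<tau> \<and> \<not> PX \<tau>" then show "\<not> P231 \<pi>" unfolding \<pi>_def using av_imp[OF d\<tau>] by simp
    qed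
    also have "\<dots> \<longleftrightarrow> (\<forall>p\<in>set [classical [1,3,2], classical [3,2,1,4], classical [4,2,1,3]]. avoids \<tau> p)"
      using contains_132[of \<tau>] contains_X[OF d\<tau>] by (simp add: avoids_def) blast
    finally have fin: "west_s \<pi> = [1..<n+1] \<longleftrightarrow> (\<forall>p\<in>set [classical [1,3,2], classical [3,2,1,4], classical [4,2,1,3]]. avoids \<tau> p)" .
    show ?thesis unfolding Sort_def Av_def mem_Collect_eq \<pi>_def[symmetric] using True fin by blast
  qed
  then show ?thesis by blast
qed

end
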